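(* Let $\Omega\subset\mathbb R^2$ be a domain, and let $h\in H_\rho$ be a boundary element whose realization $s_h$ is a single point. Then for every sequence $\{x_m\}\subset\Omega$ with $\rho_{(F,V)}(x_m,h)\to0$, one has $|x_m-s_h|\to0$ as $m\to\infty$.
   Context: The conformal capacity of a condenser is $\mathrm{cap}(F_0,F_1;\Omega)=\inf\int_\Omega|\nabla v|^2dx$, where the infimum is over nonnegative continuous $v$ with square integrable weak gradient, $v=0$ near $F_0$, and $v\ge1$ near $F_1$. Fix a continuum $F\subset\Omega$ and a domain $V$ with $F\subset V\subset\overline V\subset\Omega$, $\overline V$ compact, and $\partial V$ a quasiconformal image of the unit circle. The conformal capacitary metric is $$\rho_{(F,V)}(x,y)=\inf_{l(x,y)}\big\{\mathrm{cap}^{1/2}(F,l\setminus V;\Omega)+\mathrm{cap}^{1/2}(\partial\Omega,l\cap V;\Omega)\big\},$$ where the infimum is over rectifiable curves $l$ in $\Omega$ joining $x$ and $y$. Let $\widetilde\Omega_\rho$ be the completion of $(\Omega,\rho_{(F,V)})$ and $H_\rho=\widetilde\Omega_\rho\setminus\Omega$. For $h\in H_\rho$, let $D(h,\varepsilon)$ denote the $\rho$-ball of radius $\varepsilon$ about $h$ in $\widetilde\Omega_\rho$. The realization (impression) of $h$ is $s_h=\bigcap_{\varepsilon>0}\overline{D(h,\varepsilon)\cap\Omega}\subset\overline{\mathbb R^2}$, where the closure is Euclidean. *)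

theory Defs
  imports "HOL-Analysis.Analysis"
begin

type_synonym plane = "real^2"

text \<open>The extended plane \<open>R^2 \<union> {\<infinity>}\<close> is modelled as \<open>plane option\<close>, with \<open>None\<close> the point at infinity.\<close>

definition ext_closure :: "plane set \<Rightarrow> plane option set" where
  "ext_closure S = Some ` closure S \<union> (if bounded S then {} else {None})"

definition ext_frontier :: "plane set \<Rightarrow> plane option set" where
  "ext_frontier \<Omega> = Some ` frontier \<Omega> \<union> (if bounded \<Omega> then {} else {None})"

text \<open>\<open>U\<close> (open in the plane) together with the point at infinity if required
  is a neighbourhood in the extended plane of the set \<open>S\<close>.\<close>
definition ext_nbhd :: "plane set \<Rightarrow> plane option set \<Rightarrow> bool" where
  "ext_nbhd U S \<longleftrightarrow> open U \<and> {x. Some x \<in> S} \<subseteq> U \<and>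
     (None \<in> S \<longrightarrow> (\<exists>R. {x. norm x > R} \<subseteq> U))"

definition test_fn :: "plane set \<Rightarrow> (plane \<Rightarrow> real) \<Rightarrow> bool" where
  "test_fn \<Omega> \<phi> \<longleftrightarrow> (\<forall>x. \<phi> differentiable at x) \<and>
     (\<forall>e. continuous_on UNIV (\<lambda>x. frechet_derivative \<phi> (at x) e)) \<and>
     compact (closure {x. \<phi> x \<noteq> 0}) \<and> closure {x. \<phi> x \<noteq> 0} \<subseteq> \<Omega>"

definition weak_gradient :: "plane set \<Rightarrow> (plane \<Rightarrow> real) \<Rightarrow> (plane \<Rightarrow> plane) \<Rightarrow> bool" where
  "weak_gradient \<Omega> v g \<longleftrightarrow>
     (\<forall>K. compact K \<and> K \<subseteq> \<Omega> \<longrightarrow> g absolutely_integrable_on K) \<and>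
     (\<forall>\<phi> e. test_fn \<Omega> \<phi> \<longrightarrow>
        integral \<Omega> (\<lambda>x. v x * frechet_derivative \<phi> (at x) e)
          = - integral \<Omega> (\<lambda>x. (g x \<bullet> e) * \<phi> x))"

definition cap_admissible :: "plane set \<Rightarrow> plane option set \<Rightarrow> plane option set
     \<Rightarrow> (plane \<Rightarrow> real) \<Rightarrow> (plane \<Rightarrow> plane) \<Rightarrow> bool" where
  "cap_admissible \<Omega> F0 F1 v g \<longleftrightarrow>
     continuous_on \<Omega> v \<and> (\<forall>x\<in>\<Omega>. 0 \<le> v x) \<and>
     weak_gradient \<Omega> v g \<and> (\<lambda>x. (norm (g x))\<^sup>2) integrable_on \<Omega> \<and>
     (\<exists>U. ext_nbhd U F0 \<and> (\<forall>x\<in>U \<inter> \<Omega>. v x = 0)) \<and>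
     (\<exists>U. ext_nbhd U F1 \<and> (\<forall>x\<in>U \<inter> \<Omega>. 1 \<le> v x))"

definition cap :: "plane set \<Rightarrow> plane option set \<Rightarrow> plane option set \<Rightarrow> real" where
  "cap \<Omega> F0 F1 = Inf {integral \<Omega> (\<lambda>x. (norm (g x))\<^sup>2) | v g. cap_admissible \<Omega> F0 F1 v g}"

definition rectifiable_path :: "(real \<Rightarrow> plane) \<Rightarrow> bool" where
  "rectifiable_path l \<longleftrightarrow> path l \<and>
     bdd_above {(\<Sum>i<n. dist (l (t i)) (l (t (Suc i)))) | n t.
                  t 0 = 0 \<and> t n = 1 \<and> (\<forall>i<n. t i \<le> t (Suc i))}"

definition cc_metric :: "plane set \<Rightarrow> plane set \<Rightarrow> plane set \<Rightarrow> plane \<Rightarrow> plane \<Rightarrow> real" where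
  "cc_metric F V \<Omega> x y = Inf {sqrt (cap \<Omega> (Some ` F) (Some ` (path_image l - V)))
        + sqrt (cap \<Omega> (ext_frontier \<Omega>) (Some ` (path_image l \<inter> V))) | l.
        rectifiable_path l \<and> path_image l \<subseteq> \<Omega> \<and> pathstart l = x \<and> pathfinish l = y}"

definition quasiconformal :: "(plane \<Rightarrow> plane) \<Rightarrow> bool" where
  "quasiconformal f \<longleftrightarrow> (\<exists>f'. homeomorphism UNIV UNIV f f') \<and>
     (\<exists>H. \<forall>x. eventually (\<lambda>r. Sup ((\<lambda>y. dist (f y) (f x)) ` sphere x r)
                 \<le> H * Inf ((\<lambda>y. dist (f y) (f x)) ` sphere x r)) (at_right 0))"

definition qc_circle :: "plane set \<Rightarrow> bool" where
  "qc_circle C \<longleftrightarrow> (\<exists>f. quasiconformal f \<and> C = f ` sphere 0 1)"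

text \<open>Completion of \<open>(\<Omega>, \<rho>)\<close>: a point of \<open>H_\<rho>\<close> is represented by a \<open>\<rho>\<close>-Cauchy sequence in
  \<open>\<Omega>\<close> which does not \<open>\<rho>\<close>-converge to a point of \<open>\<Omega>\<close>.\<close>
definition boundary_element :: "plane set \<Rightarrow> (plane \<Rightarrow> plane \<Rightarrow> real) \<Rightarrow> (nat \<Rightarrow> plane) \<Rightarrow> bool" where
  "boundary_element \<Omega> \<rho> y \<longleftrightarrow> (\<forall>n. y n \<in> \<Omega>) \<and>
     (\<forall>\<epsilon>>0. \<exists>N. \<forall>m\<ge>N. \<forall>n\<ge>N. \<rho> (y m) (y n) < \<epsilon>) \<and>
     \<not> (\<exists>x\<in>\<Omega>. (\<lambda>n. \<rho> x (y n)) \<longlonglongrightarrow> 0)"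

definition completion_dist :: "(plane \<Rightarrow> plane \<Rightarrow> real) \<Rightarrow> (nat \<Rightarrow> plane) \<Rightarrow> plane \<Rightarrow> real" where
  "completion_dist \<rho> y x = lim (\<lambda>n. \<rho> x (y n))"

definition ball_trace :: "plane set \<Rightarrow> (plane \<Rightarrow> plane \<Rightarrow> real) \<Rightarrow> (nat \<Rightarrow> plane) \<Rightarrow> real \<Rightarrow> plane set" where
  "ball_trace \<Omega> \<rho> y \<epsilon> = {x\<in>\<Omega>. completion_dist \<rho> y x < \<epsilon>}"

definition realization :: "plane set \<Rightarrow> (plane \<Rightarrow> plane \<Rightarrow> real) \<Rightarrow> (nat \<Rightarrow> plane) \<Rightarrow> plane option set" where
  "realization \<Omega> \<rho> y = (\<Inter>\<epsilon>\<in>{0<..}. ext_closure (ball_trace \<Omega> \<rho> y \<epsilon>))"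

end

theory Submission
  imports Defs
begin

theorem lemma2p14:
  fixes \<Omega> F V :: "plane set" and y x :: "nat \<Rightarrow> plane" and p :: plane
  assumes "open \<Omega>" and "connected \<Omega>" and "\<Omega> \<noteq> {}"
    and "compact F" and "connected F" and "F \<noteq> {}" and "F \<subseteq> \<Omega>"
    and "open V" and "connected V" and "F \<subseteq> V" and "closure V \<subseteq> \<Omega>"
    and "compact (closure V)" and "qc_circle (frontier V)"
    and "boundary_element \<Omega> (cc_metric F V \<Omega>) y"
    and "realization \<Omega> (cc_metric F V \<Omega>) y = {Some p}"
    and "\<forall>m. x m \<in> \<Omega>"
    and "(\<lambda>m. completion_dist (cc_metric F V \<Omega>) y (x m)) \<longlonglongrightarrow> 0"
  shows "x \<longlonglongrightarrow> p"
proof -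
  define \<rho> where "\<rho> = cc_metric F V \<Omega>"
  define B where "B = ball_trace \<Omega> \<rho> y"
  have R: "realization \<Omega> \<rho> y = {Some p}" using assms(15) \<rho>_def by simp
  have mono: "B d1 \<subseteq> B d2" if "d1 \<le> d2" for d1 d2
    using that unfolding B_def ball_trace_def by auto
  have realeq: "realization \<Omega> \<rho> y = (\<Inter>d\<in>{0<..}. ext_closure (B d))"
    unfolding realization_def B_def ..
  have "None \<notin> realization \<Omega> \<rho> y" using R by auto
  then obtain d0 where d0: "d0 > 0" "bounded (B d0)"
    unfolding realeq ext_closure_def by (auto split: if_splits)
  have Some_iff: "Some z \<in> realization \<Omega> \<rho> y \<longleftrightarrow> (\<forall>d>0. z \<in> closure (B d))" for z
    unfolding realeq ext_closure_def by auto
  show ?thesis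
  proof (rule LIMSEQ_I)
    fix r :: real assume r: "r > 0"
    have "\<exists>d>0. closure (B d) - ball p r = {}"
    proof (rule ccontr)
      assume nc: "\<not> ?thesis"
      have "closure (B d0) \<inter> (\<Inter>d\<in>{0<..d0}. closure (B d) - ball p r) \<noteq> {}"
      proof (rule compact_imp_fip_image)
        show "compact (closure (B d0))" using d0 by (simp add: compact_closure)
        show "closed (closure (B d) - ball p r)" for d by (simp add: closed_Diff)
        fix I' assume fin: "finite I'" and sub: "I' \<subseteq> {0<..d0}"
        show "closure (B d0) \<inter> (\<Inter>d\<in>I'. closure (B d) - ball p r) \<noteq> {}"
        proof (cases "I' = {}")
          case True
          then show ?thesis using nc d0 by auto
        next
          case False
          define m where "m = Min I'"
          have mI: "m \<in> I'" using fin False m_def by simp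
          have mle: "\<And>d. d \<in> I' \<Longrightarrow> m \<le> d" using fin m_def by simp
          have mpos: "m > 0" "m \<le> d0" using mI sub by auto
          obtain z where z: "z \<in> closure (B m) - ball p r" using nc mpos by blast
          have "z \<in> closure (B d0)" using z closure_mono[OF mono[OF mpos(2)]] by blast
          moreover have "z \<in> closure (B d) - ball p r" if "d \<in> I'" for d
            using z closure_mono[OF mono[OF mle[OF that]]] by blast
          ultimately show ?thesis by blast
        qed
      qed
      then obtain z where z: "z \<in> closure (B d0)" "\<forall>d\<in>{0<..d0}. z \<in> closure (B d) - ball p r"
        by blast
      have "\<forall>d>0. z \<in> closure (B d)"
      proof (intro allI impI)
        fix d :: real assume "d > 0"
        show "z \<in> closure (B d)"
        proof (cases "d \<le> d0")
          case True then show ?thesis using z \<open>d>0\<close> by auto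
        next
          case False then show ?thesis using z(1) closure_mono[OF mono[of d0 d]] by auto
        qed
      qed
      then have "z = p" using Some_iff R by auto
      moreover have "z \<notin> ball p r" using z(2) d0(1) by auto
      ultimately show False using r by simp
    qed
    then obtain d where d: "d > 0" "closure (B d) \<subseteq> ball p r" by blast
    obtain N where N: "\<And>n. n \<ge> N \<Longrightarrow> norm (completion_dist \<rho> y (x n) - 0) < d"
      using LIMSEQ_D[OF assms(17)[folded \<rho>_def] d(1)] by blast
    show "\<exists>N. \<forall>n\<ge>N. norm (x n - p) < r"
    proof (intro exI allI impI)
      fix n assume "n \<ge> N"
      then have "x n \<in> B d" using N[of n] assms(16) unfolding B_def ball_trace_def by auto
      then have "x n \<in> ball p r" using d(2) closure_subset by blast
      then show "norm (x n - p) < r" by (simp add: dist_norm norm_minus_commute)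
    qed
  qed
qed

end
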